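(* Let $\pi\in S_N$ have no fixed points, and let $k=\#\{i\in[N]:\pi(i)<i\}$. Then there is a unique pair $(v,w)\in S_N\times S_N$ such that $w$ is $k$-Grassmannian, $v\le w$ in the Bruhat order, and $\pi=wv^{-1}$.
   Context: A permutation $w\in S_N$ is $k$-Grassmannian if $w(1)<\dots<w(N-k)$ and $w(N-k+1)<\dots<w(N)$. Products are composed right to left: $(wv^{-1})(j)=w(v^{-1}(j))$. *)

theory Defs
  imports "HOL-Combinatorics.Combinatorics"
begin

text \<open>Permutations of [N] = {1..N} are functions nat => nat that permute {1..N}.\<close>

definition grassmannian :: "nat \<Rightarrow> nat \<Rightarrow> (nat \<Rightarrow> nat) \<Rightarrow> bool" where
  "grassmannian N k w \<longleftrightarrow>
     (\<forall>i j. 1 \<le> i \<and> i < j \<and> j \<le> N - k \<longrightarrow> w i < w j) \<and>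
     (\<forall>i j. N - k + 1 \<le> i \<and> i < j \<and> j \<le> N \<longrightarrow> w i < w j)"

definition perm_length :: "nat \<Rightarrow> (nat \<Rightarrow> nat) \<Rightarrow> nat" where
  "perm_length N w = card {(i, j). 1 \<le> i \<and> i < j \<and> j \<le> N \<and> w j < w i}"

inductive bruhat_le :: "nat \<Rightarrow> (nat \<Rightarrow> nat) \<Rightarrow> (nat \<Rightarrow> nat) \<Rightarrow> bool" for N where
  refl: "u permutes {1..N} \<Longrightarrow> bruhat_le N u u"
| step: "bruhat_le N u v \<Longrightarrow> a \<in> {1..N} \<Longrightarrow> b \<in> {1..N} \<Longrightarrow> a \<noteq> b \<Longrightarrow>
         perm_length N v < perm_length N (v \<circ> Transposition.transpose a b) \<Longrightarrow>
         bruhat_le N u (v \<circ> Transposition.transpose a b)"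

end

theory Submission
  imports Defs
begin

lemma inv_set_finite: "finite {(i, j). 1 \<le> i \<and> i < j \<and> j \<le> N \<and> (w::nat\<Rightarrow>nat) j < w i}"
  by (rule finite_subset[of _ "{1..N} \<times> {1..N}"]) auto

lemma length_swap_less:
  fixes u :: "nat \<Rightarrow> nat"
  assumes ab: "1 \<le> a" "a < b" "b \<le> N" and uab: "u a < u b"
  shows "perm_length N u < perm_length N (u \<circ> Transposition.transpose a b)"
proof -
  define t where "t = Transposition.transpose a b"
  define I where "I = {(i, j). 1 \<le> i \<and> i < j \<and> j \<le> N \<and> u j < u i}"
  define I' where "I' = {(i, j). 1 \<le> i \<and> i < j \<and> j \<le> N \<and> (u \<circ> t) j < (u \<circ> t) i}"
  define \<phi> where "\<phi> = (\<lambda>(i::nat, j::nat). if t i < t j then (t i, t j) else (i, j))"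
  have tt: "\<And>x. t (t x) = x" unfolding t_def by simp
  have inj: "inj_on \<phi> I"
  proof (rule inj_onI)
    fix p q assume p: "p \<in> I" and q: "q \<in> I" and e: "\<phi> p = \<phi> q"
    obtain i j where pij: "p = (i, j)" by (cases p)
    obtain i' j' where qij: "q = (i', j')" by (cases q)
    have lt: "i < j" "i' < j'" using p q pij qij I_def by auto
    show "p = q"
    proof (cases "t i < t j")
      case True
      then show ?thesis
      proof (cases "t i' < t j'")
        case True
        with \<open>t i < t j\<close> e pij qij have "t i = t i'" "t j = t j'" by (auto simp: \<phi>_def)
        then have "i = i'" "j = j'" by (metis tt)+
        then show ?thesis using pij qij by simp
      next
        case False
        with \<open>t i < t j\<close> e pij qij have "t i = i'" "t j = j'" by (auto simp: \<phi>_def)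
        then have "i = t i'" "j = t j'" by (metis tt)+
        with False lt show ?thesis by simp
      qed
    next
      case False
      then show ?thesis
      proof (cases "t i' < t j'")
        case True
        with False e pij qij have "i = t i'" "j = t j'" by (auto simp: \<phi>_def)
        then have "t i = i'" "t j = j'" by (metis tt)+
        with False lt show ?thesis by simp
      next
        case False
        with \<open>\<not> t i < t j\<close> e pij qij show ?thesis by (auto simp: \<phi>_def)
      qed
    qed
  qed
  have sub: "\<phi> ` I \<subseteq> I' - {(a, b)}"
  proof
    fix r assume "r \<in> \<phi> ` I"
    then obtain i j where ij: "(i, j) \<in> I" and r: "r = \<phi> (i, j)" by auto
    have ij': "1 \<le> i" "i < j" "j \<le> N" "u j < u i" using ij I_def by auto
    show "r \<in> I' - {(a, b)}"
    proof (cases "t i < t j")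
      case True
      have "1 \<le> t i" "t j \<le> N" using ij' ab unfolding t_def transpose_def by auto
      moreover have "(u \<circ> t) (t j) < (u \<circ> t) (t i)" using ij' tt by simp
      moreover have "(t i, t j) \<noteq> (a, b)"
      proof
        assume "(t i, t j) = (a, b)"
        then have "i = b" "j = a" unfolding t_def transpose_def by (auto split: if_splits)
        with ij' ab show False by simp
      qed
      ultimately show ?thesis using True r by (auto simp: \<phi>_def I'_def)
    next
      case False
      have "(i, j) \<noteq> (a, b)" using ij' uab by auto
      have "(u \<circ> t) j < (u \<circ> t) i"
        using False ij' ab uab \<open>(i, j) \<noteq> (a, b)\<close> unfolding t_def transpose_def
        by (auto split: if_splits)
      moreover have "(i, j) \<noteq> (a, b)" using ij' uab by auto
      ultimately show ?thesis using False r ij' by (auto simp: \<phi>_def I'_def)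
    qed
  qed
  have fin: "finite I'" unfolding I'_def by (rule inv_set_finite)
  have abI': "(a, b) \<in> I'" using ab uab unfolding I'_def t_def by auto
  have "card I = card (\<phi> ` I)" using inj by (simp add: card_image)
  also have "\<dots> \<le> card (I' - {(a, b)})" using sub fin by (intro card_mono) auto
  also have "\<dots> < card I'" using fin abI' by (rule card_Diff1_less)
  finally show ?thesis unfolding perm_length_def I_def I'_def t_def by simp
qed


lemma transpose_perm_comp_self:
  "(u \<circ> Transposition.transpose a b) \<circ> Transposition.transpose a b = u"
  by (auto simp: fun_eq_iff)

lemma length_incr_order:
  fixes v :: "nat \<Rightarrow> nat"
  assumes v: "v permutes {1..N}" and a: "a \<in> {1..N}" and b: "b \<in> {1..N}" and ab: "a < b"
    and len: "perm_length N v < perm_length N (v \<circ> Transposition.transpose a b)"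
  shows "v a < v b"
proof (rule ccontr)
  assume "\<not> v a < v b"
  moreover have "v a \<noteq> v b" using permutes_inj[OF v] ab by (metis inj_eq less_irrefl)
  ultimately have "v b < v a" by simp
  define u where "u = v \<circ> Transposition.transpose a b"
  have "u a < u b" using \<open>v b < v a\<close> by (simp add: u_def)
  then have "perm_length N u < perm_length N (u \<circ> Transposition.transpose a b)"
    using a b ab by (intro length_swap_less) auto
  then have "perm_length N u < perm_length N v" by (simp add: u_def transpose_perm_comp_self)
  with len show False by (simp add: u_def)
qed

lemma card_swap_mono:
  fixes u :: "nat \<Rightarrow> nat"
  assumes fin: "finite I"
    and c1: "a \<in> I \<Longrightarrow> b \<notin> I \<Longrightarrow> Q (u a) \<Longrightarrow> Q (u b)"
    and c2: "b \<in> I \<Longrightarrow> a \<notin> I \<Longrightarrow> Q (u b) \<Longrightarrow> Q (u a)"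
  shows "card {x\<in>I. Q (u x)} \<le> card {x\<in>I. Q ((u \<circ> Transposition.transpose a b) x)}"
proof -
  define t where "t = Transposition.transpose a b"
  have tt: "\<And>x. t (t x) = x" unfolding t_def by simp
  show ?thesis
  proof (cases "a \<in> I \<longleftrightarrow> b \<in> I")
    case True
    have tI: "\<And>x. t x \<in> I \<longleftrightarrow> x \<in> I" using True unfolding t_def transpose_def by auto
    have "{x\<in>I. Q ((u \<circ> t) x)} = t ` {x\<in>I. Q (u x)}"
    proof (intro equalityI subsetI)
      fix x assume "x \<in> {x\<in>I. Q ((u \<circ> t) x)}"
      then have "t x \<in> {x\<in>I. Q (u x)}" using tI by auto
      then show "x \<in> t ` {x\<in>I. Q (u x)}" using tt by (metis image_eqI)
    next
      fix x assume "x \<in> t ` {x\<in>I. Q (u x)}"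
      then show "x \<in> {x\<in>I. Q ((u \<circ> t) x)}" using tI tt by auto
    qed
    moreover have "inj t" unfolding t_def by simp
    ultimately show ?thesis unfolding t_def[symmetric] by (simp add: card_image inj_on_subset)
  next
    case False
    have "{x\<in>I. Q (u x)} \<subseteq> {x\<in>I. Q ((u \<circ> t) x)}"
    proof
      fix x assume x: "x \<in> {x\<in>I. Q (u x)}"
      show "x \<in> {x\<in>I. Q ((u \<circ> t) x)}"
      proof (cases "x = a \<or> x = b")
        case True
        then show ?thesis using x False c1 c2 unfolding t_def by auto
      next
        case False
        then show ?thesis using x unfolding t_def by auto
      qed
    qed
    then show ?thesis unfolding t_def[symmetric] using fin by (intro card_mono) auto
  qed
qed

lemma bruhat_le_permutes:
  assumes "bruhat_le N u v" shows "u permutes {1..N}" "v permutes {1..N}"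
  using assms
proof (induction rule: bruhat_le.induct)
  case (refl u) then show "u permutes {1..N}" "u permutes {1..N}" by auto
next
  case (step u v a b)
  show "u permutes {1..N}" using step by auto
  show "v \<circ> Transposition.transpose a b permutes {1..N}"
    by (rule permutes_compose[OF permutes_swap_id]) (use step in auto)
qed

lemma bruhat_step_order:
  assumes "bruhat_le N u v" and a: "a \<in> {1..N}" and b: "b \<in> {1..N}" and "a \<noteq> b"
    and len: "perm_length N v < perm_length N (v \<circ> Transposition.transpose a b)"
  shows "a < b \<Longrightarrow> v a < v b" "b < a \<Longrightarrow> v b < v a"
proof -
  have v: "v permutes {1..N}" using bruhat_le_permutes(2)[OF assms(1)] .
  show "a < b \<Longrightarrow> v a < v b" using length_incr_order[OF v a b _ len] by simp
  show "b < a \<Longrightarrow> v b < v a" using length_incr_order[OF v b a _ len[unfolded transpose_commute[of a b]]] by simp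
qed

lemma bruhat_rank1:
  assumes "bruhat_le N u v"
  shows "card {x\<in>{1..p}. j < u x} \<le> card {x\<in>{1..p}. j < v x}"
  using assms
proof (induction rule: bruhat_le.induct)
  case (refl u) then show ?case by simp
next
  case (step u v a b)
  have o1: "a < b \<Longrightarrow> v a < v b" and o2: "b < a \<Longrightarrow> v b < v a"
    using bruhat_step_order[OF step(1-5)] by auto
  have "card {x\<in>{1..p}. j < v x} \<le> card {x\<in>{1..p}. j < (v \<circ> Transposition.transpose a b) x}"
    by (rule card_swap_mono) (use o1 o2 step(2,3) in auto)
  with step.IH show ?case by simp
qed

lemma bruhat_rank2:
  assumes "bruhat_le N u v"
  shows "card {x\<in>{p..N}. u x < j} \<le> card {x\<in>{p..N}. v x < j}"
  using assms
proof (induction rule: bruhat_le.induct)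
  case (refl u) then show ?case by simp
next
  case (step u v a b)
  have o1: "a < b \<Longrightarrow> v a < v b" and o2: "b < a \<Longrightarrow> v b < v a"
    using bruhat_step_order[OF step(1-5)] by auto
  have "card {x\<in>{p..N}. v x < j} \<le> card {x\<in>{p..N}. (v \<circ> Transposition.transpose a b) x < j}"
    by (rule card_swap_mono) (use o1 o2 step(2,3) in auto)
  with step.IH show ?case by simp
qed

lemma bruhat_trans:
  assumes "bruhat_le N v w" "bruhat_le N u v" shows "bruhat_le N u w"
  using assms
proof (induction rule: bruhat_le.induct)
  case (refl u) then show ?case by simp
next
  case (step u v a b) show ?case by (rule bruhat_le.step) (use step in auto)
qed


definition Pc :: "nat \<Rightarrow> nat \<Rightarrow> (nat \<Rightarrow> nat) \<Rightarrow> (nat \<Rightarrow> nat) \<Rightarrow> bool" where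
  "Pc N k w v \<longleftrightarrow> (\<forall>p\<in>{1..N-k}. v p \<le> w p) \<and> (\<forall>p\<in>{N-k+1..N}. w p \<le> v p)"

lemma bruhat_Pc:
  assumes "bruhat_le N v w" "grassmannian N k w"
  shows "Pc N k w v"
  unfolding Pc_def
proof safe
  fix p assume p: "p \<in> {1..N-k}"
  have "{x\<in>{1..p}. w p < w x} = {}"
  proof -
    { fix x assume "x \<in> {1..p}" "w p < w x"
      then have False using assms(2) p unfolding grassmannian_def
        by (metis atLeastAtMost_iff le_neq_implies_less less_asym' order.trans) }
    then show ?thesis by blast
  qed
  have le: "card {x\<in>{1..p}. w p < v x} \<le> card {x\<in>{1..p}. w p < w x}"
    by (rule bruhat_rank1[OF assms(1)])
  show "v p \<le> w p"
  proof (rule ccontr)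
    assume "\<not> v p \<le> w p"
    then have "p \<in> {x\<in>{1..p}. w p < v x}" using p by auto
    then have "0 < card {x\<in>{1..p}. w p < v x}" by (intro card_gt_0_iff[THEN iffD2]) auto
    moreover have "card {x\<in>{1..p}. w p < w x} = 0" by (simp only: \<open>{x\<in>{1..p}. w p < w x} = {}\<close> card.empty)
    ultimately show False using le by linarith
  qed
next
  fix p assume p: "p \<in> {N-k+1..N}"
  have "{x\<in>{p..N}. w x < w p} = {}"
  proof -
    { fix x assume "x \<in> {p..N}" "w x < w p"
      then have False using assms(2) p unfolding grassmannian_def
        by (metis atLeastAtMost_iff le_neq_implies_less less_asym' order.trans) }
    then show ?thesis by blast
  qed
  have le: "card {x\<in>{p..N}. v x < w p} \<le> card {x\<in>{p..N}. w x < w p}"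
    by (rule bruhat_rank2[OF assms(1)])
  show "w p \<le> v p"
  proof (rule ccontr)
    assume "\<not> w p \<le> v p"
    then have "p \<in> {x\<in>{p..N}. v x < w p}" using p by auto
    then have "0 < card {x\<in>{p..N}. v x < w p}" by (intro card_gt_0_iff[THEN iffD2]) auto
    moreover have "card {x\<in>{p..N}. w x < w p} = 0" by (simp only: \<open>{x\<in>{p..N}. w x < w p} = {}\<close> card.empty)
    ultimately show False using le by linarith
  qed
qed

lemma perm_card_pred:
  assumes "u permutes S" "finite S"
  shows "card {p\<in>S. Q (u p)} = card {z\<in>S. Q z}"
proof -
  have "u ` {p\<in>S. Q (u p)} = {z\<in>S. Q z}"
  proof (intro equalityI subsetI)
    fix z assume "z \<in> u ` {p\<in>S. Q (u p)}"
    then show "z \<in> {z\<in>S. Q z}" using assms(1) by (auto simp: permutes_in_image)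
  next
    fix z assume z: "z \<in> {z\<in>S. Q z}"
    then have "z \<in> u ` S" using permutes_image[OF assms(1)] by simp
    then obtain p where "p \<in> S" "z = u p" by auto
    with z show "z \<in> u ` {p\<in>S. Q (u p)}" by auto
  qed
  moreover have "inj_on u {p\<in>S. Q (u p)}" using inj_on_subset[OF permutes_inj[OF assms(1)] subset_UNIV] .
  ultimately show ?thesis by (metis card_image)
qed

lemma exist_step:
  fixes v w :: "nat \<Rightarrow> nat"
  assumes w: "w permutes {1..N}" and gw: "grassmannian N k w"
    and v: "v permutes {1..N}" and P: "Pc N k w v" and ne: "v \<noteq> w"
  shows "\<exists>a b. 1 \<le> a \<and> a < b \<and> b \<le> N \<and> v a < v b \<and> Pc N k w (v \<circ> Transposition.transpose a b)"
proof -
  define m where "m = N - k"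
  have inc1: "\<And>i j. 1 \<le> i \<Longrightarrow> i < j \<Longrightarrow> j \<le> m \<Longrightarrow> w i < w j"
    using gw unfolding grassmannian_def m_def by blast
  have inc2: "\<And>i j. m + 1 \<le> i \<Longrightarrow> i < j \<Longrightarrow> j \<le> N \<Longrightarrow> w i < w j"
    using gw unfolding grassmannian_def m_def by blast
  have P1: "\<And>p. 1 \<le> p \<Longrightarrow> p \<le> m \<Longrightarrow> v p \<le> w p"
    using P unfolding Pc_def m_def by auto
  have P2: "\<And>p. m < p \<Longrightarrow> p \<le> N \<Longrightarrow> w p \<le> v p"
    using P unfolding Pc_def m_def by auto
  have vin: "\<And>p. p \<in> {1..N} \<Longrightarrow> v p \<in> {1..N}" using permutes_in_image[OF v] by blast
  have win: "\<And>p. p \<in> {1..N} \<Longrightarrow> w p \<in> {1..N}" using permutes_in_image[OF w] by blast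
  have vinj: "\<And>p q. v p = v q \<Longrightarrow> p = q" using permutes_inj[OF v] by (simp add: inj_eq)
  have winj: "\<And>p q. w p = w q \<Longrightarrow> p = q" using permutes_inj[OF w] by (simp add: inj_eq)
  define D where "D = {p\<in>{1..N}. v p \<noteq> w p}"
  have "D \<noteq> {}"
  proof
    assume "D = {}"
    have "v = w"
    proof
      fix p show "v p = w p"
      proof (cases "p \<in> {1..N}")
        case True then show ?thesis using \<open>D = {}\<close> D_def by auto
      next
        case False then show ?thesis using v w by (simp add: permutes_not_in)
      qed
    qed
    with ne show False by simp
  qed
  have finD: "finite D" unfolding D_def by simp
  define c where "c = Max (v ` D)"
  have "c \<in> v ` D" unfolding c_def using finD \<open>D \<noteq> {}\<close> by (intro Max_in) auto
  then obtain x where xD: "x \<in> D" and vx: "v x = c" by auto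
  have agree1: "\<And>p. p \<in> {1..N} \<Longrightarrow> c < v p \<Longrightarrow> w p = v p"
  proof (rule ccontr)
    fix p assume p: "p \<in> {1..N}" "c < v p" "w p \<noteq> v p"
    then have "p \<in> D" unfolding D_def by auto
    then have "v p \<le> c" unfolding c_def using finD by (intro Max_ge) auto
    with p show False by simp
  qed
  have agree2: "\<And>p. p \<in> {1..N} \<Longrightarrow> c < w p \<Longrightarrow> v p = w p"
  proof -
    fix p assume p: "p \<in> {1..N}" "c < w p"
    have "w p \<in> v ` {1..N}" using permutes_image[OF v] win[OF p(1)] by simp
    then obtain q where q: "q \<in> {1..N}" "v q = w p" by auto
    then have "w q = v q" using agree1 p by auto
    then have "q = p" using q winj by simp
    then show "v p = w p" using q by simp
  qed
  have xN: "x \<in> {1..N}" and vwx: "v x \<noteq> w x" using xD D_def by auto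
  have "c \<in> w ` {1..N}" using permutes_image[OF w] vin[OF xN] vx by simp
  then obtain y where yN: "y \<in> {1..N}" and wy: "w y = c" by auto
  have xm: "m < x"
  proof (rule ccontr)
    assume "\<not> m < x"
    then have "v x \<le> w x" using P1 xN by auto
    then have "c < w x" using vwx vx by simp
    then show False using agree2 xN vwx by auto
  qed
  have ym: "y \<le> m"
  proof (rule ccontr)
    assume "\<not> y \<le> m"
    then have "w y \<le> v y" using P2 yN by auto
    moreover have "v y \<noteq> c"
    proof
      assume "v y = c" then have "y = x" using vx vinj by simp
      then show False using wy vx vwx by simp
    qed
    ultimately have "c < v y" using wy by simp
    then have "w y = v y" using agree1 yN by auto
    with \<open>c < v y\<close> wy show False by simp
  qed
  have yx: "y < x" using xm ym by simp
  have wxc: "w x \<le> c" using P2 xm xN vx by auto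
  have "\<exists>r. y \<le> r \<and> r < x \<and> w x \<le> v r \<and> v r < c"
  proof (rule ccontr)
    assume H: "\<not> ?thesis"
    define Vs where "Vs = {p\<in>{1..N}. w x \<le> v p}"
    define Ws where "Ws = {p\<in>{1..N}. w x \<le> w p}"
    have "card Vs = card Ws"
      unfolding Vs_def Ws_def
      using perm_card_pred[OF v, of "\<lambda>z. w x \<le> z"] perm_card_pred[OF w, of "\<lambda>z. w x \<le> z"] by simp
    have sub: "Vs \<subseteq> Ws - {y}"
    proof
      fix p assume "p \<in> Vs"
      then have pN: "p \<in> {1..N}" and jp: "w x \<le> v p" unfolding Vs_def by auto
      show "p \<in> Ws - {y}"
      proof (cases "p < y")
        case True
        then have "v p \<le> w p" using P1 pN ym by auto
        then show ?thesis using True jp pN unfolding Ws_def by auto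
      next
        case False
        show ?thesis
        proof (cases "p < x")
          case True
          then have "c \<le> v p" using H False jp by auto
          moreover have "v p \<noteq> c" using vx vinj True by auto
          ultimately have "c < v p" by simp
          then have "w p = v p" using agree1 pN by auto
          then show ?thesis using \<open>c < v p\<close> wy jp pN unfolding Ws_def by auto
        next
          case False
          then have "w x \<le> w p" using inc2[of x p] xm pN by (cases "x = p") auto
          then show ?thesis using False yx pN unfolding Ws_def by auto
        qed
      qed
    qed
    have "y \<in> Ws" unfolding Ws_def using yN wy wxc by simp
    have "finite Ws" unfolding Ws_def by simp
    have "card Vs \<le> card (Ws - {y})" using sub \<open>finite Ws\<close> by (intro card_mono) auto
    also have "\<dots> < card Ws" using \<open>finite Ws\<close> \<open>y \<in> Ws\<close> by (rule card_Diff1_less)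
    finally show False using \<open>card Vs = card Ws\<close> by simp
  qed
  then obtain r where ry: "y \<le> r" and rx: "r < x" and jr: "w x \<le> v r" and rc: "v r < c" by auto
  have r1: "1 \<le> r" using ry yN by simp
  have xN': "x \<le> N" using xN by simp
  have "Pc N k w (v \<circ> Transposition.transpose r x)"
    unfolding Pc_def m_def[symmetric]
  proof safe
    fix p assume p: "p \<in> {1..m}"
    show "(v \<circ> Transposition.transpose r x) p \<le> w p"
    proof (cases "p = r")
      case True
      have "w y \<le> w r" using inc1[of y r] ry p True yN by (cases "y = r") auto
      then show ?thesis using True vx wy by simp
    next
      case False
      have "p \<noteq> x" using p xm by auto
      then show ?thesis using False P1 p by simp
    qed
  next
    fix p assume p: "p \<in> {m+1..N}"
    show "w p \<le> (v \<circ> Transposition.transpose r x) p"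
    proof (cases "p = r")
      case True
      have "w r < w x" using inc2[of r x] p True rx xN by auto
      then show ?thesis using True vx wxc by simp
    next
      case False
      show ?thesis
      proof (cases "p = x")
        case True then show ?thesis using False jr by simp
      next
        case False
        then show ?thesis using \<open>p \<noteq> r\<close> P2 p by simp
      qed
    qed
  qed
  then show ?thesis using r1 rx xN' rc vx by (intro exI[of _ r] exI[of _ x]) auto
qed


lemma perm_length_bound: "perm_length N v \<le> N * N"
proof -
  have "perm_length N v \<le> card ({1..N} \<times> {1..N})"
    unfolding perm_length_def by (rule card_mono) auto
  then show ?thesis by (simp add: card_cartesian_product)
qed

lemma Pc_bruhat:
  assumes w: "w permutes {1..N}" and gw: "grassmannian N k w"
  shows "v permutes {1..N} \<Longrightarrow> Pc N k w v \<Longrightarrow> bruhat_le N v w"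
proof (induction "N * N - perm_length N v" arbitrary: v rule: less_induct)
  case less
  show ?case
  proof (cases "v = w")
    case True then show ?thesis using less.prems by (simp add: bruhat_le.refl)
  next
    case False
    obtain a b where ab: "1 \<le> a" "a < b" "b \<le> N" "v a < v b"
      and P': "Pc N k w (v \<circ> Transposition.transpose a b)"
      using exist_step[OF w gw less.prems(1) less.prems(2) False] by blast
    define v' where "v' = v \<circ> Transposition.transpose a b"
    have v'p: "v' permutes {1..N}" unfolding v'_def
      by (rule permutes_compose[OF permutes_swap_id less.prems(1)]) (use ab in auto)
    have lt: "perm_length N v < perm_length N v'" unfolding v'_def
      using length_swap_less[OF ab] .
    have "perm_length N v' \<le> N * N" by (rule perm_length_bound)
    then have "N * N - perm_length N v' < N * N - perm_length N v" using lt by linarith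
    then have IH: "bruhat_le N v' w" using less.hyps v'p P' unfolding v'_def by blast
    have "bruhat_le N v v'" unfolding v'_def
      by (rule bruhat_le.step[OF bruhat_le.refl[OF less.prems(1)]]) (use ab lt[unfolded v'_def] in auto)
    then show ?thesis using bruhat_trans[OF IH] by blast
  qed
qed

lemma sorted_unique:
  fixes f g :: "nat \<Rightarrow> nat"
  assumes f: "\<And>i j. i \<in> I \<Longrightarrow> j \<in> I \<Longrightarrow> i < j \<Longrightarrow> f i < f j"
    and g: "\<And>i j. i \<in> I \<Longrightarrow> j \<in> I \<Longrightarrow> i < j \<Longrightarrow> g i < g j"
    and im: "f ` I = g ` I"
  shows "p \<in> I \<Longrightarrow> f p = g p"
proof (induction p rule: less_induct)
  case (less p)
  have aux: "False" if IH: "\<And>q. q < p \<Longrightarrow> q \<in> I \<Longrightarrow> f q = g q" and pI: "p \<in> I"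
    and lt: "f p < g p" and imfg: "f ` I = g ` I"
    and f: "\<And>i j. i \<in> I \<Longrightarrow> j \<in> I \<Longrightarrow> i < j \<Longrightarrow> f i < f j"
    and g: "\<And>i j. i \<in> I \<Longrightarrow> j \<in> I \<Longrightarrow> i < j \<Longrightarrow> g i < g j"
    for f g :: "nat \<Rightarrow> nat"
  proof -
    have "f p \<in> g ` I" using imfg pI by auto
    then obtain q where q: "q \<in> I" "f p = g q" by auto
    have "q < p"
    proof (rule ccontr)
      assume "\<not> q < p"
      then have "g p \<le> g q" using g[OF pI q(1)] by (cases "p = q") auto
      with lt q show False by simp
    qed
    then have "f q = f p" using IH q by simp
    moreover have "f q < f p" using f[OF q(1) pI \<open>q < p\<close>] .
    ultimately show False by simp
  qed
  show ?case
  proof (rule ccontr)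
    assume ne: "f p \<noteq> g p"
    show False
    proof (cases "f p < g p")
      case True
      show False by (rule aux[of f g]) (use less True im f g in auto)
    next
      case False
      with ne have "g p < f p" by simp
      show False by (rule aux[of g f]) (use less \<open>g p < f p\<close> im f g in \<open>auto simp: eq_commute\<close>)
    qed
  qed
qed

lemma grass_inc:
  assumes "grassmannian N k w"
  shows "\<And>i j. i \<in> {1..N-k} \<Longrightarrow> j \<in> {1..N-k} \<Longrightarrow> i < j \<Longrightarrow> w i < w j"
    and "\<And>i j. i \<in> {N-k+1..N} \<Longrightarrow> j \<in> {N-k+1..N} \<Longrightarrow> i < j \<Longrightarrow> w i < w j"
  using assms unfolding grassmannian_def by auto

lemma grass_eq:
  assumes w1: "w1 permutes {1..N}" and w2: "w2 permutes {1..N}"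
    and g1: "grassmannian N k w1" and g2: "grassmannian N k w2"
    and im: "w1 ` {N-k+1..N} = w2 ` {N-k+1..N}"
  shows "w1 = w2"
proof -
  have split: "{1..N-k} = {1..N} - {N-k+1..N}" by auto
  have im1: "w1 ` {1..N-k} = w2 ` {1..N-k}"
    unfolding split image_set_diff[OF permutes_inj[OF w1]] image_set_diff[OF permutes_inj[OF w2]]
      permutes_image[OF w1] permutes_image[OF w2] im ..
  show ?thesis
  proof
    fix p
    show "w1 p = w2 p"
    proof (cases "p \<in> {1..N}")
      case True
      show ?thesis
      proof (cases "p \<le> N - k")
        case True
        then show ?thesis using sorted_unique[OF grass_inc(1)[OF g1] grass_inc(1)[OF g2] im1] \<open>p \<in> {1..N}\<close>
          by auto
      next
        case False
        then show ?thesis using sorted_unique[OF grass_inc(2)[OF g1] grass_inc(2)[OF g2] im] \<open>p \<in> {1..N}\<close>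
          by auto
      qed
    next
      case False
      then show ?thesis using w1 w2 by (simp add: permutes_not_in)
    qed
  qed
qed

lemma solution_image:
  fixes \<pi> v w :: "nat \<Rightarrow> nat"
  assumes pi: "\<pi> permutes {1..N}" and fp: "\<forall>i\<in>{1..N}. \<pi> i \<noteq> i"
    and gw: "grassmannian N k w" and br: "bruhat_le N v w" and eq: "\<pi> = w \<circ> inv v"
  shows "w ` {N-k+1..N} = \<pi> ` {i\<in>{1..N}. \<pi> i < i}"
proof -
  define m where "m = N - k"
  have v: "v permutes {1..N}" and w: "w permutes {1..N}" using bruhat_le_permutes[OF br] by auto
  have P: "Pc N k w v" using bruhat_Pc[OF br gw] .
  have P1: "\<And>p. 1 \<le> p \<Longrightarrow> p \<le> m \<Longrightarrow> v p \<le> w p"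
    using P unfolding Pc_def m_def by auto
  have P2: "\<And>p. m < p \<Longrightarrow> p \<le> N \<Longrightarrow> w p \<le> v p"
    using P unfolding Pc_def m_def by auto
  have piv: "\<And>p. \<pi> (v p) = w p" using eq permutes_inverses(2)[OF v] by simp
  have vin: "\<And>p. p \<in> {1..N} \<Longrightarrow> v p \<in> {1..N}" using permutes_in_image[OF v] by blast
  have "v ` {m+1..N} = {i\<in>{1..N}. \<pi> i < i}"
  proof (intro equalityI subsetI)
    fix a assume "a \<in> v ` {m+1..N}"
    then obtain q where q: "q \<in> {m+1..N}" "a = v q" by auto
    then have aN: "a \<in> {1..N}" using vin[of q] by auto
    have "\<pi> a \<le> a" using P2[of q] q piv by auto
    moreover have "\<pi> a \<noteq> a" using fp aN by auto
    ultimately show "a \<in> {i\<in>{1..N}. \<pi> i < i}" using aN by simp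
  next
    fix a assume a: "a \<in> {i\<in>{1..N}. \<pi> i < i}"
    then have "a \<in> v ` {1..N}" using permutes_image[OF v] by simp
    then obtain q where q: "q \<in> {1..N}" "a = v q" by auto
    have "\<not> q \<le> m"
    proof
      assume "q \<le> m"
      then have "v q \<le> w q" using P1 q by auto
      then have "a \<le> \<pi> a" using q piv by simp
      with a show False by simp
    qed
    then show "a \<in> v ` {m+1..N}" using q by auto
  qed
  moreover have "w ` {m+1..N} = \<pi> ` (v ` {m+1..N})"
    by (simp add: image_image piv)
  ultimately show ?thesis unfolding m_def by simp
qed

lemma construct_grass:
  fixes B :: "nat set"
  assumes BN: "B \<subseteq> {1..N}" and cB: "card B = k"
  shows "\<exists>w. w permutes {1..N} \<and> grassmannian N k w \<and> w ` {N-k+1..N} = B"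
proof -
  define m where "m = N - k"
  have kN: "k \<le> N" using card_mono[OF _ BN] cB by simp
  have mk: "m + k = N" using kN m_def by simp
  define C where "C = {1..N} - B"
  have cC: "card C = m" unfolding C_def m_def using card_Diff_subset[OF _ BN] cB
    by (simp add: finite_subset[OF BN])
  have finB: "finite B" using finite_subset[OF BN] by simp
  have finC: "finite C" unfolding C_def by simp
  define LC where "LC = sorted_list_of_set C"
  define LB where "LB = sorted_list_of_set B"
  have lLC: "length LC = m" and sLC: "set LC = C" and stC: "sorted_wrt (<) LC"
    unfolding LC_def using cC finC by (auto simp: strict_sorted_list_of_set)
  have lLB: "length LB = k" and sLB: "set LB = B" and stB: "sorted_wrt (<) LB"
    unfolding LB_def using cB finB by (auto simp: strict_sorted_list_of_set)
  define w where "w = (\<lambda>p. if 1 \<le> p \<and> p \<le> m then LC ! (p - 1)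
                           else if m < p \<and> p \<le> N then LB ! (p - m - 1) else p)"
  have im1: "w ` {1..m} = C"
  proof (intro equalityI subsetI)
    fix c assume "c \<in> w ` {1..m}"
    then obtain p where p: "p \<in> {1..m}" "c = w p" by auto
    then have "c = LC ! (p - 1)" unfolding w_def by simp
    moreover have "p - 1 < length LC" using p lLC by auto
    ultimately show "c \<in> C" using sLC nth_mem by blast
  next
    fix c assume "c \<in> C"
    then obtain i where i: "i < length LC" "LC ! i = c" using sLC by (metis in_set_conv_nth)
    then have "w (i + 1) = c" using lLC unfolding w_def by simp
    moreover have "i + 1 \<in> {1..m}" using i lLC by simp
    ultimately show "c \<in> w ` {1..m}" by (metis image_eqI)
  qed
  have im2: "w ` {m+1..N} = B"
  proof (intro equalityI subsetI)
    fix c assume "c \<in> w ` {m+1..N}"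
    then obtain p where p: "p \<in> {m+1..N}" "c = w p" by auto
    then have "c = LB ! (p - m - 1)" unfolding w_def by simp
    moreover have "p - m - 1 < length LB" using p lLB mk by auto
    ultimately show "c \<in> B" using sLB nth_mem by blast
  next
    fix c assume "c \<in> B"
    then obtain i where i: "i < length LB" "LB ! i = c" using sLB by (metis in_set_conv_nth)
    then have "w (i + m + 1) = c" using lLB mk unfolding w_def by simp
    moreover have "i + m + 1 \<in> {m+1..N}" using i lLB mk by simp
    ultimately show "c \<in> w ` {m+1..N}" by (metis image_eqI)
  qed
  have Nsplit: "{1..N} = {1..m} \<union> {m+1..N}" using mk by auto
  have "w ` {1..N} = C \<union> B" by (subst Nsplit) (simp only: image_Un im1 im2)
  also have "C \<union> B = {1..N}" using BN C_def by auto
  finally have imN: "w ` {1..N} = {1..N}" .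
  have "inj_on w {1..N}" by (rule eq_card_imp_inj_on) (use imN in auto)
  then have "bij_betw w {1..N} {1..N}" using imN by (simp add: bij_betw_def)
  moreover have "\<And>x. x \<notin> {1..N} \<Longrightarrow> w x = x" unfolding w_def using mk by auto
  ultimately have wp: "w permutes {1..N}" by (rule bij_imp_permutes)
  have "grassmannian N k w"
    unfolding grassmannian_def m_def[symmetric]
  proof safe
    fix i j assume ij: "1 \<le> i" "i < j" "j \<le> m"
    have "LC ! (i - 1) < LC ! (j - 1)" by (rule sorted_wrt_nth_less[OF stC]) (use ij lLC in auto)
    then show "w i < w j" using ij unfolding w_def by simp
  next
    fix i j assume ij: "m + 1 \<le> i" "i < j" "j \<le> N"
    have "LB ! (i - m - 1) < LB ! (j - m - 1)" by (rule sorted_wrt_nth_less[OF stB]) (use ij lLB mk in auto)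
    then show "w i < w j" using ij unfolding w_def by simp
  qed
  then show ?thesis using wp im2 unfolding m_def by blast
qed

theorem corollary3p1:
  fixes N :: nat and \<pi> :: "nat \<Rightarrow> nat"
  assumes "\<pi> permutes {1..N}"
    and "\<forall>i\<in>{1..N}. \<pi> i \<noteq> i"
    and "k = card {i \<in> {1..N}. \<pi> i < i}"
  shows "\<exists>!p. fst p permutes {1..N} \<and> snd p permutes {1..N} \<and>
              grassmannian N k (snd p) \<and> bruhat_le N (fst p) (snd p) \<and>
              \<pi> = snd p \<circ> inv (fst p)"
proof -
  define A where "A = {i \<in> {1..N}. \<pi> i < i}"
  have BN: "\<pi> ` A \<subseteq> {1..N}" using permutes_in_image[OF assms(1)] unfolding A_def by blast
  have cB: "card (\<pi> ` A) = k" unfolding assms(3) A_def[symmetric]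
    using inj_on_subset[OF permutes_inj[OF assms(1)] subset_UNIV] by (simp add: card_image)
  obtain w where w: "w permutes {1..N}" and gw: "grassmannian N k w" and imw: "w ` {N-k+1..N} = \<pi> ` A"
    using construct_grass[OF BN cB] by blast
  define v where "v = inv \<pi> \<circ> w"
  have v: "v permutes {1..N}" unfolding v_def by (rule permutes_compose[OF w permutes_inv[OF assms(1)]])
  have bpi: "bij \<pi>" and bw: "bij w" using permutes_bij assms(1) w by auto
  have "inv v = inv w \<circ> \<pi>" unfolding v_def
    by (simp add: o_inv_distrib[OF bij_imp_bij_inv[OF bpi] bw] inv_inv_eq[OF bpi])
  then have eq: "\<pi> = w \<circ> inv v" using permutes_inv_o(1)[OF w] by (simp add: o_assoc)
  have piv: "\<And>p. \<pi> (v p) = w p" unfolding v_def using permutes_inverses(1)[OF assms(1)] by simp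
  have P: "Pc N k w v"
    unfolding Pc_def
  proof safe
    fix p assume p: "p \<in> {1..N-k}"
    have "w p \<notin> w ` {N-k+1..N}"
    proof
      assume "w p \<in> w ` {N-k+1..N}"
      then obtain q where q: "q \<in> {N-k+1..N}" "w p = w q" by blast
      then have "p = q" using injD[OF permutes_inj[OF w]] by blast
      with p q(1) show False by simp
    qed
    then have "w p \<notin> \<pi> ` A" using imw by simp
    have "v p \<notin> A"
    proof
      assume "v p \<in> A"
      then have "\<pi> (v p) \<in> \<pi> ` A" by (rule imageI)
      with \<open>w p \<notin> \<pi> ` A\<close> piv show False by simp
    qed
    moreover have "v p \<in> {1..N}"
    proof -
      have "p \<in> {1..N}" using p by auto
      then show ?thesis using permutes_in_image[OF v] by blast
    qed
    ultimately have "\<not> \<pi> (v p) < v p" unfolding A_def by blast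
    then have "v p \<le> \<pi> (v p)" by linarith
    moreover have "\<pi> (v p) \<noteq> v p" using assms(2) \<open>v p \<in> {1..N}\<close> by auto
    ultimately show "v p \<le> w p" using piv by simp
  next
    fix p assume p: "p \<in> {N-k+1..N}"
    then have "w p \<in> \<pi> ` A" using imw by auto
    then obtain a where a: "a \<in> A" "w p = \<pi> a" by auto
    then have "\<pi> (v p) = \<pi> a" using piv by simp
    then have "v p = a" using injD[OF permutes_inj[OF assms(1)]] by blast
    then show "w p \<le> v p" using a unfolding A_def by simp
  qed
  have br: "bruhat_le N v w" using Pc_bruhat[OF w gw v P] .
  show ?thesis
  proof (rule ex1I[of _ "(v, w)"])
    show "fst (v, w) permutes {1..N} \<and> snd (v, w) permutes {1..N} \<and>
      grassmannian N k (snd (v, w)) \<and> bruhat_le N (fst (v, w)) (snd (v, w)) \<and> \<pi> = snd (v, w) \<circ> inv (fst (v, w))"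
      using v w gw br eq by simp
  next
    fix q assume q: "fst q permutes {1..N} \<and> snd q permutes {1..N} \<and>
      grassmannian N k (snd q) \<and> bruhat_le N (fst q) (snd q) \<and> \<pi> = snd q \<circ> inv (fst q)"
    obtain v' w' where qq: "q = (v', w')" by (cases q)
    have v': "v' permutes {1..N}" and w': "w' permutes {1..N}" and gw': "grassmannian N k w'"
      and br': "bruhat_le N v' w'" and eq': "\<pi> = w' \<circ> inv v'" using q qq by auto
    have "w' ` {N-k+1..N} = \<pi> ` A"
      unfolding A_def by (rule solution_image[OF assms(1) assms(2) gw' br' eq'])
    then have ww: "w' = w" using grass_eq[OF w' w gw' gw] imw by simp
    have "\<pi> \<circ> v' = w'" unfolding eq' by (simp only: o_assoc[symmetric] permutes_inv_o(2)[OF v'] comp_id)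
    have pv': "\<pi> (v' x) = w' x" for x
    proof -
      have "(\<pi> \<circ> v') x = w' x" by (simp only: \<open>\<pi> \<circ> v' = w'\<close>)
      then show ?thesis by simp
    qed
    have "\<And>x. inv \<pi> (w' x) = v' x"
    proof -
      fix x show "inv \<pi> (w' x) = v' x" using permutes_inverses(2)[OF assms(1), of "v' x"] pv'[of x] by simp
    qed
    then have "v' = v" using ww v_def by (auto simp: fun_eq_iff)
    then show "q = (v, w)" using qq ww by simp
  qed
qed

end
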